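(* Let $\Lambda$ be a positive definite diagonal $n\times n$ matrix, $N\ge2$, and let $Q_0,\dots,Q_N\in SO(n)$, $P_0,\dots,P_N\in\mathbb{R}^{n\times n}$, $U_0,\dots,U_{N-1}\in SO(n)$ satisfy the symmetric representation of the discrete rigid body equations: for $k=0,\dots,N-1$, $$Q_{k+1}=Q_kU_k,\qquad P_{k+1}=P_kU_k,\qquad U_k\Lambda-\Lambda U_k^T=Q_k^TP_k-P_k^TQ_k.$$ For $k=1,\dots,N$ define $\Omega_k:=Q_k^TQ_{k-1}$ and $M_k:=Q_{k-1}^TP_{k-1}-P_{k-1}^TQ_{k-1}$. Then $(Q_k,\Omega_k,M_k)$ satisfy the Moser–Veselov discrete rigid body equations: $$M_k=\Omega_k^T\Lambda-\Lambda\Omega_k\quad(k=1,\dots,N),\qquad M_{k+1}=\Omega_kM_k\Omega_k^T\quad(k=1,\dots,N-1).$$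
   Context: $SO(n)$ is the group of real orthogonal $n\times n$ matrices of determinant $1$; $A^T$ is the transpose. *)

theory Defs
  imports "HOL-Analysis.Analysis"
begin

definition SO :: "(real^'n^'n) set" where
  "SO = {A. orthogonal_matrix A \<and> det A = 1}"

definition pos_diag :: "real^'n^'n \<Rightarrow> bool" where
  "pos_diag L \<longleftrightarrow> (\<forall>i j. i \<noteq> j \<longrightarrow> L $ i $ j = 0) \<and> (\<forall>i. L $ i $ i > 0)"

end

theory Submission
  imports Defs
begin

lemma mdiff_l: "(A::real^'n^'m) ** (B - C) = A ** B - A ** (C::real^'k^'n)"
  by (simp add: matrix_matrix_mult_def sum_subtractf right_diff_distrib vec_eq_iff)

lemma mdiff_r: "((B::real^'n^'m) - C) ** (A::real^'k^'n) = B ** A - C ** A"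
  by (simp add: matrix_matrix_mult_def sum_subtractf left_diff_distrib vec_eq_iff)

lemma om_eq:
  fixes Q U :: "real^'n^'n"
  assumes "Q \<in> SO"
  shows "transpose (Q ** U) ** Q = transpose U"
proof -
  have "transpose Q ** Q = mat 1" using assms by (simp add: SO_def orthogonal_matrix)
  then show ?thesis
    by (metis matrix_transpose_mul matrix_mul_assoc matrix_mul_rid)
qed

theorem mainTheorem6:
  fixes L :: "real^'n^'n"
    and Q P U :: "nat \<Rightarrow> real^'n^'n"
    and N :: nat
  assumes "pos_diag L"
    and "N \<ge> 2"
    and "\<And>k. k \<le> N \<Longrightarrow> Q k \<in> SO"
    and "\<And>k. k < N \<Longrightarrow> U k \<in> SO"
    and "\<And>k. k < N \<Longrightarrow> Q (Suc k) = Q k ** U k"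
    and "\<And>k. k < N \<Longrightarrow> P (Suc k) = P k ** U k"
    and "\<And>k. k < N \<Longrightarrow>
           U k ** L - L ** transpose (U k) = transpose (Q k) ** P k - transpose (P k) ** Q k"
  defines "Omega \<equiv> (\<lambda>k. transpose (Q k) ** Q (k - 1))"
    and "M \<equiv> (\<lambda>k. transpose (Q (k - 1)) ** P (k - 1) - transpose (P (k - 1)) ** Q (k - 1))"
  shows "(\<forall>k. 1 \<le> k \<and> k \<le> N \<longrightarrow> M k = transpose (Omega k) ** L - L ** Omega k)
       \<and> (\<forall>k. 1 \<le> k \<and> k \<le> N - 1 \<longrightarrow> M (Suc k) = Omega k ** M k ** transpose (Omega k))"
proof -
  have OmS: "Omega (Suc j) = transpose (U j)" if "j < N" for j
    using that assms(3,5) om_eq[of "Q j" "U j"] by (simp add: Omega_def)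
  show ?thesis
  proof (intro conjI allI impI)
    fix k assume k: "1 \<le> k \<and> k \<le> N"
    then obtain j where j: "k = Suc j" "j < N" by (cases k) auto
    show "M k = transpose (Omega k) ** L - L ** Omega k"
      using j OmS[of j] assms(7)[of j] by (simp add: M_def)
  next
    fix k assume k: "1 \<le> k \<and> k \<le> N - 1"
    then obtain j where j: "k = Suc j" "j < N" "k < N" by (cases k) auto
    have "M (Suc k) = transpose (Q k) ** P k - transpose (P k) ** Q k" by (simp add: M_def)
    also have "\<dots> = transpose (U j) ** (transpose (Q j) ** P j - transpose (P j) ** Q j) ** U j"
      using j assms(5,6)[of j]
      by (simp add: matrix_transpose_mul matrix_mul_assoc mdiff_l mdiff_r)
    also have "\<dots> = Omega k ** M k ** transpose (Omega k)"
      using j OmS[of j] by (simp add: M_def)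
    finally show "M (Suc k) = Omega k ** M k ** transpose (Omega k)" .
  qed
qed

end
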